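(* Let $\mathcal{G}=(V,E)$ be a connected undirected graph with node set $V=\{1,\dots,n\}$, and for each node $i$ let $N^i$ denote its set of neighbors. Consider the time-varying function $F(\mathbf{y};t)=f(\mathbf{y};t)+g(\mathbf{y};t)$ of $\mathbf{y}=(\mathbf{y}^1;\dots;\mathbf{y}^n)\in\mathbb{R}^{np}$, $\mathbf{y}^i\in\mathbb{R}^p$, where $f(\mathbf{y};t)=\sum_{i\in V}f^i(\mathbf{y}^i;t)$ and $g(\mathbf{y};t)=\sum_{i\in V}g^{i,i}(\mathbf{y}^i;t)+\sum_{(i,j)\in E}g^{i,j}(\mathbf{y}^i,\mathbf{y}^j;t)$, all functions being twice continuously differentiable in $\mathbf{y}$ and such that $\nabla_{t\mathbf{y}}F$ exists. Fix a point $(\mathbf{y}_k,t_k)$ and define $$\mathbf{D}_k:=\nabla_{\mathbf{y}\mathbf{y}}f(\mathbf{y}_k;t_k)+\mathrm{diag}[\nabla_{\mathbf{y}\mathbf{y}}g(\mathbf{y}_k;t_k)],\qquad \mathbf{B}_k:=\mathrm{diag}[\nabla_{\mathbf{y}\mathbf{y}}g(\mathbf{y}_k;t_k)]-\nabla_{\mathbf{y}\mathbf{y}}g(\mathbf{y}_k;t_k),$$ where $\mathrm{diag}[\cdot]$ keeps the $p\times p$ diagonal blocks and sets all other blocks to zero, and assume $\mathbf{D}_k$ is positive definite. For an integer $K\ge 0$ let $$\mathbf{H}_{k,(K)}^{-1}:=\mathbf{D}_k^{-1/2}\sum_{\tau=0}^{K}\big(\mathbf{D}_k^{-1/2}\mathbf{B}_k\mathbf{D}_k^{-1/2}\big)^{\tau}\mathbf{D}_k^{-1/2},\qquad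 \mathbf{p}_{k,(K)}:=-\mathbf{H}_{k,(K)}^{-1}\nabla_{t\mathbf{y}}F(\mathbf{y}_k;t_k).$$ Denote by $\mathbf{D}_k^{ij},\mathbf{B}_k^{ij}$ the $(i,j)$-th $p\times p$ blocks of $\mathbf{D}_k,\mathbf{B}_k$ and by $\nabla_{t\mathbf{y}}F^i(\mathbf{y}_k;t_k)$ the $i$-th $p$-dimensional subvector of $\nabla_{t\mathbf{y}}F(\mathbf{y}_k;t_k)$. Define, for each node $i$, $\mathbf{p}^i_{k,(0)}:=-(\mathbf{D}_k^{ii})^{-1}\nabla_{t\mathbf{y}}F^i(\mathbf{y}_k;t_k)$ and, for $\tau=0,\dots,K-1$, $$\mathbf{p}^i_{k,(\tau+1)}:=(\mathbf{D}_k^{ii})^{-1}\Big(\sum_{j\in N^i}\mathbf{B}_k^{ij}\mathbf{p}^j_{k,(\tau)}-\nabla_{t\mathbf{y}}F^i(\mathbf{y}_k;t_k)\Big).$$ Then for every $i$, $\mathbf{p}^i_{k,(K)}$ equals the $i$-th subvector of $\mathbf{p}_{k,(K)}$.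
   Context: $\nabla_{\mathbf{y}\mathbf{y}}$ denotes the Hessian with respect to $\mathbf{y}$ and $\nabla_{t\mathbf{y}}F$ the partial derivative with respect to $t$ of the gradient $\nabla_{\mathbf{y}}F$. The matrix $\mathbf{D}_k$ is block diagonal, and the block $\mathbf{B}_k^{ij}$ for $i\ne j$ equals $-\nabla_{\mathbf{y}^i\mathbf{y}^j}g^{i,j}(\mathbf{y}_k^i,\mathbf{y}_k^j;t_k)$ if $(i,j)$ is an edge and zero otherwise; diagonal blocks of $\mathbf{B}_k$ are zero. *)

theory Defs
  imports "HOL-Analysis.Analysis"
begin

text \<open>Vectors in R^(np) are indexed by pairs (node, coordinate): type real^('n \<times> 'p).
  Node i's subvector y^i is blk y i; the (i,j)-th p-by-p block of a matrix is mblk M i j.\<close>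

definition blk :: "real^('n::finite \<times> 'p::finite) \<Rightarrow> 'n \<Rightarrow> real^'p" where
  "blk y i = (\<chi> a. y $ (i, a))"

definition mblk :: "real^('n::finite \<times> 'p::finite)^('n \<times> 'p) \<Rightarrow> 'n \<Rightarrow> 'n \<Rightarrow> real^'p^'p" where
  "mblk M i j = (\<chi> a b. M $ (i, a) $ (j, b))"

definition bdiag :: "real^('n::finite \<times> 'p::finite)^('n \<times> 'p) \<Rightarrow> real^('n \<times> 'p)^('n \<times> 'p)" where
  "bdiag M = (\<chi> c d. if fst c = fst d then M $ c $ d else 0)"

definition pdiff :: "(real^'m::finite \<Rightarrow> real) \<Rightarrow> real^'m \<Rightarrow> 'm \<Rightarrow> real" where
  "pdiff h z c = deriv (\<lambda>s. h (z + s *\<^sub>R axis c 1)) 0"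

definition has_pdiff :: "(real^'m::finite \<Rightarrow> real) \<Rightarrow> real^'m \<Rightarrow> 'm \<Rightarrow> bool" where
  "has_pdiff h z c \<longleftrightarrow> (\<lambda>s. h (z + s *\<^sub>R axis c 1)) differentiable (at 0)"

definition C2 :: "(real^'m::finite \<Rightarrow> real) \<Rightarrow> bool" where
  "C2 h \<longleftrightarrow>
     (\<forall>c. (\<forall>z. has_pdiff h z c) \<and> continuous_on UNIV (\<lambda>z. pdiff h z c)) \<and>
     (\<forall>c d. (\<forall>z. has_pdiff (\<lambda>w. pdiff h w c) z d) \<and>
            continuous_on UNIV (\<lambda>z. pdiff (\<lambda>w. pdiff h w c) z d))"

definition hess :: "(real^'m::finite \<Rightarrow> real) \<Rightarrow> real^'m \<Rightarrow> real^'m^'m" where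
  "hess h z = (\<chi> c d. pdiff (\<lambda>w. pdiff h w c) z d)"

definition grad_t :: "(real^'m::finite \<Rightarrow> real \<Rightarrow> real) \<Rightarrow> real^'m \<Rightarrow> real \<Rightarrow> real^'m" where
  "grad_t F y t = (\<chi> c. deriv (\<lambda>s. pdiff (\<lambda>z. F z s) y c) t)"

definition pos_def :: "real^'m::finite^'m \<Rightarrow> bool" where
  "pos_def M \<longleftrightarrow> transpose M = M \<and> (\<forall>x. x \<noteq> 0 \<longrightarrow> 0 < x \<bullet> (M *v x))"

primrec mpow :: "real^'m::finite^'m \<Rightarrow> nat \<Rightarrow> real^'m^'m" where
  "mpow M 0 = mat 1"
| "mpow M (Suc k) = M ** mpow M k"

text \<open>Distributed recursion p^i_{k,(tau)}, with N the neighbour map and v = nabla_{ty}F(y_k;t_k).\<close>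
primrec dist_dir :: "real^('n::finite \<times> 'p::finite)^('n \<times> 'p) \<Rightarrow> real^('n \<times> 'p)^('n \<times> 'p) \<Rightarrow>
    ('n \<Rightarrow> 'n set) \<Rightarrow> real^('n \<times> 'p) \<Rightarrow> nat \<Rightarrow> 'n \<Rightarrow> real^'p" where
  "dist_dir D B N v 0 i = - (matrix_inv (mblk D i i) *v blk v i)"
| "dist_dir D B N v (Suc k) i =
     matrix_inv (mblk D i i) *v ((\<Sum>j\<in>N i. mblk B i j *v dist_dir D B N v k j) - blk v i)"

definition fsum :: "('n::finite \<Rightarrow> real^'p \<Rightarrow> real \<Rightarrow> real) \<Rightarrow> real^('n \<times> 'p) \<Rightarrow> real \<Rightarrow> real" where
  "fsum f y t = (\<Sum>i\<in>UNIV. f i (blk y i) t)"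

definition gsum :: "('n::finite \<Rightarrow> real^'p \<Rightarrow> real \<Rightarrow> real) \<Rightarrow>
    ('n \<Rightarrow> 'n \<Rightarrow> real^'p \<Rightarrow> real^'p \<Rightarrow> real \<Rightarrow> real) \<Rightarrow> ('n \<times> 'n) set \<Rightarrow>
    real^('n \<times> 'p) \<Rightarrow> real \<Rightarrow> real" where
  "gsum gd ge E y t = (\<Sum>i\<in>UNIV. gd i (blk y i) t) + (\<Sum>(i, j)\<in>E. ge i j (blk y i) (blk y j) t)"

end

theory Submission imports Defs begin
definition P2 :: "(real^'m::finite \<Rightarrow> real) \<Rightarrow> bool" where
  "P2 h \<longleftrightarrow> (\<forall>c z. has_pdiff h z c) \<and> (\<forall>c d z. has_pdiff (\<lambda>w. pdiff h w c) z d)"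

lemma C2_P2: "C2 h \<Longrightarrow> P2 h"
  unfolding C2_def P2_def by blast

lemma pdiff_has: "has_pdiff h z c \<Longrightarrow> ((\<lambda>s. h (z + s *\<^sub>R axis c 1)) has_real_derivative pdiff h z c) (at 0)"
  unfolding has_pdiff_def pdiff_def using DERIV_deriv_iff_real_differentiable by blast

lemma pdiff_sum:
  assumes "finite A" "\<forall>k\<in>A. has_pdiff (h k) z c"
  shows "pdiff (\<lambda>z. \<Sum>k\<in>A. h k z) z c = (\<Sum>k\<in>A. pdiff (h k) z c)"
    and "has_pdiff (\<lambda>z. \<Sum>k\<in>A. h k z) z c"
proof -
  have d: "((\<lambda>s. \<Sum>k\<in>A. h k (z + s *\<^sub>R axis c 1)) has_real_derivative (\<Sum>k\<in>A. pdiff (h k) z c)) (at 0)"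
    by (rule DERIV_sum) (use pdiff_has assms in auto)
  have "pdiff (\<lambda>z. \<Sum>k\<in>A. h k z) z c = deriv (\<lambda>s. \<Sum>k\<in>A. h k (z + s *\<^sub>R axis c 1)) 0"
    by (simp add: pdiff_def)
  then show "pdiff (\<lambda>z. \<Sum>k\<in>A. h k z) z c = (\<Sum>k\<in>A. pdiff (h k) z c)"
    using DERIV_imp_deriv[OF d] by simp
  show "has_pdiff (\<lambda>z. \<Sum>k\<in>A. h k z) z c"
    unfolding has_pdiff_def using d real_differentiable_def by auto
qed

lemma pdiff_add:
  assumes "has_pdiff h1 z c" "has_pdiff h2 z c"
  shows "pdiff (\<lambda>z. h1 z + h2 z) z c = pdiff h1 z c + pdiff h2 z c"
    and "has_pdiff (\<lambda>z. h1 z + h2 z) z c"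
proof -
  have d: "((\<lambda>s. h1 (z + s *\<^sub>R axis c 1) + h2 (z + s *\<^sub>R axis c 1)) has_real_derivative (pdiff h1 z c + pdiff h2 z c)) (at 0)"
    by (rule DERIV_add) (use pdiff_has assms in auto)
  have "pdiff (\<lambda>z. h1 z + h2 z) z c = deriv (\<lambda>s. h1 (z + s *\<^sub>R axis c 1) + h2 (z + s *\<^sub>R axis c 1)) 0"
    by (simp add: pdiff_def)
  then show "pdiff (\<lambda>z. h1 z + h2 z) z c = pdiff h1 z c + pdiff h2 z c"
    using DERIV_imp_deriv[OF d] by simp
  show "has_pdiff (\<lambda>z. h1 z + h2 z) z c"
    unfolding has_pdiff_def using d real_differentiable_def by auto
qed

lemma hess_sum_entry:
  assumes "finite A" "\<forall>k\<in>A. P2 (h k)"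
  shows "hess (\<lambda>y. \<Sum>k\<in>A. h k y) z $ c $ d = (\<Sum>k\<in>A. hess (h k) z $ c $ d)"
    and "P2 (\<lambda>y. \<Sum>k\<in>A. h k y)"
proof -
  have eq: "\<And>c. (\<lambda>w. pdiff (\<lambda>y. \<Sum>k\<in>A. h k y) w c) = (\<lambda>w. \<Sum>k\<in>A. pdiff (h k) w c)"
    using pdiff_sum(1)[OF assms(1)] assms(2) unfolding P2_def by blast
  show "hess (\<lambda>y. \<Sum>k\<in>A. h k y) z $ c $ d = (\<Sum>k\<in>A. hess (h k) z $ c $ d)"
    unfolding hess_def using eq pdiff_sum(1)[OF assms(1), of "\<lambda>k w. pdiff (h k) w c" z d] assms(2)
    unfolding P2_def by simp
  show "P2 (\<lambda>y. \<Sum>k\<in>A. h k y)"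
    unfolding P2_def eq
  proof (intro conjI allI)
    fix c z d
    show "has_pdiff (\<lambda>y. \<Sum>k\<in>A. h k y) z c"
      using pdiff_sum(2)[OF assms(1), of h z c] assms(2) unfolding P2_def by blast
    show "has_pdiff (\<lambda>w. \<Sum>k\<in>A. pdiff (h k) w c) z d"
      using pdiff_sum(2)[OF assms(1), of "\<lambda>k w. pdiff (h k) w c" z d] assms(2) unfolding P2_def by blast
  qed
qed

lemma hess_add_entry:
  assumes "P2 h1" "P2 h2"
  shows "hess (\<lambda>y. h1 y + h2 y) z $ c $ d = hess h1 z $ c $ d + hess h2 z $ c $ d"
    and "P2 (\<lambda>y. h1 y + h2 y)"
proof -
  have eq: "\<And>c. (\<lambda>w. pdiff (\<lambda>y. h1 y + h2 y) w c) = (\<lambda>w. pdiff h1 w c + pdiff h2 w c)"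
    using assms unfolding P2_def by (intro ext pdiff_add(1)) auto
  show "hess (\<lambda>y. h1 y + h2 y) z $ c $ d = hess h1 z $ c $ d + hess h2 z $ c $ d"
    unfolding hess_def using eq pdiff_add(1)[of "\<lambda>w. pdiff h1 w c" z d "\<lambda>w. pdiff h2 w c"] assms
    unfolding P2_def by simp
  show "P2 (\<lambda>y. h1 y + h2 y)"
    unfolding P2_def eq
  proof (intro conjI allI)
    fix c z d
    show "has_pdiff (\<lambda>y. h1 y + h2 y) z c"
      using pdiff_add(2)[of h1 z c h2] assms unfolding P2_def by blast
    show "has_pdiff (\<lambda>w. pdiff h1 w c + pdiff h2 w c) z d"
      using pdiff_add(2)[of "\<lambda>w. pdiff h1 w c" z d "\<lambda>w. pdiff h2 w c"] assms unfolding P2_def by blast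
  qed
qed

definition dep :: "'m set \<Rightarrow> (real^'m::finite \<Rightarrow> real) \<Rightarrow> bool" where
  "dep S h \<longleftrightarrow> (\<forall>z z'. (\<forall>a\<in>S. z$a = z'$a) \<longrightarrow> h z = h z')"

lemma dep_pdiff: "dep S h \<Longrightarrow> dep S (\<lambda>w. pdiff h w c)"
  unfolding dep_def pdiff_def
proof (intro allI impI)
  fix z z' :: "real^'a"
  assume h: "\<forall>z z'. (\<forall>a\<in>S. z $ a = z' $ a) \<longrightarrow> h z = h z'" and ag: "\<forall>a\<in>S. z $ a = z' $ a"
  have "(\<lambda>s. h (z + s *\<^sub>R axis c 1)) = (\<lambda>s. h (z' + s *\<^sub>R axis c 1))"
    by (intro ext, rule h[rule_format]) (simp add: ag)
  then show "deriv (\<lambda>s. h (z + s *\<^sub>R axis c 1)) 0 = deriv (\<lambda>s. h (z' + s *\<^sub>R axis c 1)) 0" by simp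
qed

lemma deriv_const0: "deriv (\<lambda>s::real. k) x = 0"
  by (rule DERIV_imp_deriv) (rule DERIV_const)

lemma pdiff_out: "dep S h \<Longrightarrow> c \<notin> S \<Longrightarrow> pdiff h z c = 0"
proof -
  assume h: "dep S h" and c: "c \<notin> S"
  have "(\<lambda>s. h (z + s *\<^sub>R axis c 1)) = (\<lambda>s. h z)"
  proof (rule ext)
    fix s
    show "h (z + s *\<^sub>R axis c 1) = h z"
      by (rule h[unfolded dep_def, rule_format]) (use c in \<open>auto simp: axis_def\<close>)
  qed
  then show ?thesis unfolding pdiff_def by (simp add: deriv_const0)
qed

lemma hess_out: "dep S h \<Longrightarrow> c \<notin> S \<or> d \<notin> S \<Longrightarrow> hess h z $ c $ d = 0"
proof -
  assume h: "dep S h" and cd: "c \<notin> S \<or> d \<notin> S"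
  show ?thesis
  proof (cases "d \<notin> S")
    case True
    then show ?thesis unfolding hess_def using pdiff_out[OF dep_pdiff[OF h] True] by simp
  next
    case False
    then have "c \<notin> S" using cd by auto
    then have "(\<lambda>w. pdiff h w c) = (\<lambda>w. 0)" using pdiff_out[OF h] by auto
    then have "hess h z $ c $ d = pdiff (\<lambda>w. 0) z d" unfolding hess_def by simp
    then show ?thesis unfolding pdiff_def by (simp add: deriv_const0)
  qed
qed


lemma sum_pair_UNIV: "(\<Sum>x\<in>(UNIV::('a::finite\<times>'b::finite) set). g x) = (\<Sum>j\<in>UNIV. \<Sum>b\<in>UNIV. g (j,b))"
  by (simp add: sum.cartesian_product flip: UNIV_Times_UNIV)

lemma blk_nth: "blk x i $ a = x $ (i, a)"
  by (simp add: blk_def)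

lemma mblk_nth: "mblk M i j $ a $ b = M $ (i, a) $ (j, b)"
  by (simp add: mblk_def)

lemma blk_eq: "(\<And>i. blk x i = blk y i) \<Longrightarrow> x = y"
  by (metis blk_nth prod.collapse vec_eq_iff)

lemma blk_minus: "blk (x - y) i = blk x i - blk y i"
  by (simp add: vec_eq_iff blk_nth)

lemma blk_uminus: "blk (- x) i = - blk x i"
  by (simp add: vec_eq_iff blk_nth)

lemma blk_zero: "blk 0 i = 0"
  by (simp add: vec_eq_iff blk_nth)

lemma blk_mv: "blk (M *v x) i = (\<Sum>j\<in>UNIV. mblk M i j *v blk x j)"
proof -
  have "blk (M *v x) i $ a = (\<Sum>j\<in>UNIV. mblk M i j *v blk x j) $ a" for a
    by (simp add: blk_nth sum_component matrix_vector_mult_def mblk_nth sum_pair_UNIV)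
  then show ?thesis by (simp add: vec_eq_iff)
qed

lemma bd_mv:
  assumes "\<forall>c d. fst c \<noteq> fst d \<longrightarrow> M $ c $ d = 0"
  shows "blk (M *v x) i = mblk M i i *v blk x i"
proof -
  have "mblk M i j = 0" if "j \<noteq> i" for j
    using assms that by (simp add: vec_eq_iff mblk_nth)
  then have "(\<Sum>j\<in>UNIV. mblk M i j *v blk x j) = (\<Sum>j\<in>UNIV. if j = i then mblk M i i *v blk x i else 0)"
    by (intro sum.cong) auto
  then show ?thesis by (simp add: blk_mv)
qed

lemma inv_facts: "invertible A \<Longrightarrow> A ** matrix_inv A = mat 1 \<and> matrix_inv A ** A = mat 1"
  unfolding matrix_inv_def invertible_def by (rule someI_ex)

lemma pd_invertible: "pos_def D \<Longrightarrow> invertible D"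
  unfolding invertible_left_inverse matrix_left_invertible_ker pos_def_def
  by (metis inner_zero_right less_irrefl)

lemma mblk_invertible:
  assumes bd: "\<forall>c d. fst c \<noteq> fst d \<longrightarrow> D $ c $ d = 0" and pd: "pos_def D"
  shows "invertible (mblk D i i)"
  unfolding invertible_left_inverse matrix_left_invertible_ker
proof (intro allI impI)
  fix w assume w: "mblk D i i *v w = 0"
  define x :: "real^('a \<times> 'b)" where "x = (\<chi> c. if fst c = i then w $ snd c else 0)"
  have bx: "blk x j = (if j = i then w else 0)" for j
    by (simp add: vec_eq_iff blk_nth x_def)
  have "D *v x = 0"
    by (rule blk_eq) (simp add: bd_mv[OF bd] bx w blk_zero)
  then have "x = 0" using pd unfolding pos_def_def by (metis inner_zero_right less_irrefl)
  then show "w = 0" using bx[of i] by (simp add: blk_zero)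
qed

lemma blk_inv:
  assumes bd: "\<forall>c d. fst c \<noteq> fst d \<longrightarrow> D $ c $ d = 0" and pd: "pos_def D"
  shows "blk (matrix_inv D *v u) i = matrix_inv (mblk D i i) *v blk u i"
proof -
  define x where "x = matrix_inv D *v u"
  have "D *v x = u" unfolding x_def
    using inv_facts[OF pd_invertible[OF pd]] by (simp add: matrix_vector_mul_assoc)
  then have "blk u i = mblk D i i *v blk x i" using bd_mv[OF bd] by metis
  then have "matrix_inv (mblk D i i) *v blk u i = blk x i"
    using inv_facts[OF mblk_invertible[OF bd pd]] by (simp add: matrix_vector_mul_assoc)
  then show ?thesis by (simp add: x_def)
qed

lemma blk_nb:
  assumes "\<forall>j. j \<notin> N \<longrightarrow> mblk B i j = 0"
  shows "blk (B *v x) i = (\<Sum>j\<in>N. mblk B i j *v blk x j)"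
  unfolding blk_mv using assms by (intro sum.mono_neutral_right) auto


lemma sum_mv: "finite A \<Longrightarrow> (\<Sum>s\<in>A. F s) *v u = (\<Sum>s\<in>A. F s *v u)"
  by (induction A rule: finite_induct) (simp_all add: matrix_vector_mult_add_rdistrib matrix_vector_mult_0)

lemma dep_blk1: "dep {a. fst a = i} (\<lambda>y. F (blk y i))"
  unfolding dep_def by (auto intro!: arg_cong[where f=F] simp: vec_eq_iff blk_nth)

lemma dep_blk2: "dep {a. fst a = i \<or> fst a = j} (\<lambda>y. F (blk y i) (blk y j))"
proof -
  have "F (blk z i) (blk z j) = F (blk z' i) (blk z' j)"
    if "\<forall>a\<in>{a. fst a = i \<or> fst a = j}. z $ a = z' $ a" for z z' :: "real^('a::finite\<times>'b::finite)"
  proof -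
    have "blk z i = blk z' i" "blk z j = blk z' j" using that by (auto simp: vec_eq_iff blk_nth)
    then show ?thesis by simp
  qed
  then show ?thesis unfolding dep_def by blast
qed

theorem proposition1:
  fixes E :: "('n::finite \<times> 'n) set"
    and f :: "'n \<Rightarrow> real^'p::finite \<Rightarrow> real \<Rightarrow> real"
    and gd :: "'n \<Rightarrow> real^'p \<Rightarrow> real \<Rightarrow> real"
    and ge :: "'n \<Rightarrow> 'n \<Rightarrow> real^'p \<Rightarrow> real^'p \<Rightarrow> real \<Rightarrow> real"
    and yk :: "real^('n \<times> 'p)" and tk :: real
    and Dhalf :: "real^('n \<times> 'p)^('n \<times> 'p)"
    and K :: nat
  assumes undirected: "\<forall>i j. (i, j) \<in> E \<longrightarrow> (j, i) \<in> E"
    and no_loops: "\<forall>i. (i, i) \<notin> E"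
    and connected: "\<forall>i j. (i, j) \<in> E\<^sup>*"
    and C2_f: "\<forall>i t. C2 (\<lambda>y. f i (blk y i) t)"
    and C2_gd: "\<forall>i t. C2 (\<lambda>y. gd i (blk y i) t)"
    and C2_ge: "\<forall>i j t. (i, j) \<in> E \<longrightarrow> C2 (\<lambda>y. ge i j (blk y i) (blk y j) t)"
    and grad_t_exists: "\<forall>y t c. (\<lambda>s. pdiff (\<lambda>z. fsum f z s + gsum gd ge E z s) y c)
                                     differentiable (at t)"
    and D_pd: "pos_def (hess (\<lambda>y. fsum f y tk) yk + bdiag (hess (\<lambda>y. gsum gd ge E y tk) yk))"
    and Dhalf_def: "pos_def Dhalf \<and>
        Dhalf ** Dhalf = matrix_inv (hess (\<lambda>y. fsum f y tk) yk + bdiag (hess (\<lambda>y. gsum gd ge E y tk) yk))"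
  shows
    "let F = (\<lambda>y t. fsum f y t + gsum gd ge E y t);
         Hg = hess (\<lambda>y. gsum gd ge E y tk) yk;
         D = hess (\<lambda>y. fsum f y tk) yk + bdiag Hg;
         B = bdiag Hg - Hg;
         v = grad_t F yk tk;
         Hinv = Dhalf ** (\<Sum>\<tau>\<in>{0..K}. mpow (Dhalf ** B ** Dhalf) \<tau>) ** Dhalf;
         p = - (Hinv *v v)
     in \<forall>i. dist_dir D B (\<lambda>i. {j. (i, j) \<in> E}) v K i = blk p i"
proof -
  define Hf where "Hf = hess (\<lambda>y. fsum f y tk) yk"
  define Hg where "Hg = hess (\<lambda>y. gsum gd ge E y tk) yk"
  define D where "D = Hf + bdiag Hg"
  define B where "B = bdiag Hg - Hg"
  define v where "v = grad_t (\<lambda>y t. fsum f y t + gsum gd ge E y t) yk tk"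
  define N where "N = (\<lambda>i. {j. (i, j) \<in> E})"
  define Dinv where "Dinv = matrix_inv D"
  define M where "M = Dinv ** B"
  define w where "w = Dinv *v v"
  define X where "X = Dhalf ** B ** Dhalf"
  have zf: "hess (\<lambda>y. f i (blk y i) tk) yk $ c $ d = 0" if "fst c \<noteq> fst d" for i c d
    by (rule hess_out[OF dep_blk1]) (use that in auto)
  have zgd: "hess (\<lambda>y. gd i (blk y i) tk) yk $ c $ d = 0" if "fst c \<noteq> fst d" for i c d
    by (rule hess_out[OF dep_blk1]) (use that in auto)
  have Hf0: "Hf $ c $ d = 0" if "fst c \<noteq> fst d" for c d
  proof -
    have "Hf $ c $ d = (\<Sum>i\<in>UNIV. hess (\<lambda>y. f i (blk y i) tk) yk $ c $ d)"
      unfolding Hf_def fsum_def by (rule hess_sum_entry(1)) (use C2_f C2_P2 in auto)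
    then show ?thesis using zf[OF that] by simp
  qed
  have P2gd: "P2 (\<lambda>y. \<Sum>i\<in>UNIV. gd i (blk y i) tk)"
    by (rule hess_sum_entry(2)) (use C2_gd C2_P2 in auto)
  have P2ge_all: "\<forall>k\<in>E. P2 (\<lambda>y. case k of (i, j) \<Rightarrow> ge i j (blk y i) (blk y j) tk)"
    using C2_ge C2_P2 by auto
  have P2ge: "P2 (\<lambda>y. \<Sum>k\<in>E. case k of (i, j) \<Rightarrow> ge i j (blk y i) (blk y j) tk)"
    by (rule hess_sum_entry(2)) (use P2ge_all in auto)
  have Hg0: "Hg $ c $ d = 0" if "fst c \<noteq> fst d" "(fst c, fst d) \<notin> E" for c d
  proof -
    have "Hg $ c $ d = hess (\<lambda>y. \<Sum>i\<in>UNIV. gd i (blk y i) tk) yk $ c $ d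
        + hess (\<lambda>y. \<Sum>k\<in>E. case k of (i, j) \<Rightarrow> ge i j (blk y i) (blk y j) tk) yk $ c $ d"
      unfolding Hg_def gsum_def by (rule hess_add_entry(1)[OF P2gd P2ge])
    also have "\<dots> = (\<Sum>i\<in>UNIV. hess (\<lambda>y. gd i (blk y i) tk) yk $ c $ d)
        + (\<Sum>k\<in>E. hess (\<lambda>y. case k of (i, j) \<Rightarrow> ge i j (blk y i) (blk y j) tk) yk $ c $ d)"
      by (subst hess_sum_entry(1), simp, use C2_gd C2_P2 in auto)
         (subst hess_sum_entry(1), simp_all add: P2ge_all)
    also have "\<dots> = 0"
    proof -
      have "hess (\<lambda>y. case k of (i, j) \<Rightarrow> ge i j (blk y i) (blk y j) tk) yk $ c $ d = 0" if k: "k \<in> E" for k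
      proof -
        obtain i j where kij: "k = (i, j)" by (cases k)
        have "hess (\<lambda>y. ge i j (blk y i) (blk y j) tk) yk $ c $ d = 0"
        proof (rule hess_out[OF dep_blk2])
          show "c \<notin> {a. fst a = i \<or> fst a = j} \<or> d \<notin> {a. fst a = i \<or> fst a = j}"
            using \<open>fst c \<noteq> fst d\<close> \<open>(fst c, fst d) \<notin> E\<close> k kij undirected by auto
        qed
        then show ?thesis using kij by simp
      qed
      then show ?thesis using zgd[OF that(1)] by simp
    qed
    finally show ?thesis .
  qed
  have D_bd: "\<forall>c d. fst c \<noteq> fst d \<longrightarrow> D $ c $ d = 0"
    by (auto simp: D_def bdiag_def Hf0)
  have pd: "pos_def D" using D_pd unfolding D_def Hf_def Hg_def .
  have Bnb: "\<forall>j. j \<notin> N i \<longrightarrow> mblk B i j = 0" for i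
  proof (intro allI impI)
    fix j assume j: "j \<notin> N i"
    show "mblk B i j = 0"
    proof (cases "j = i")
      case True then show ?thesis by (simp add: vec_eq_iff mblk_nth B_def bdiag_def)
    next
      case False
      then have "(i, j) \<notin> E" using j by (simp add: N_def)
      then show ?thesis using False Hg0 by (simp add: vec_eq_iff mblk_nth B_def bdiag_def)
    qed
  qed
  define q where "q \<tau> = (\<chi> c. dist_dir D B N v \<tau> (fst c) $ snd c)" for \<tau>
  have bq: "blk (q \<tau>) i = dist_dir D B N v \<tau> i" for \<tau> i
    by (simp add: vec_eq_iff blk_nth q_def)
  have q0: "q 0 = - (Dinv *v v)"
    by (rule blk_eq) (simp add: bq blk_uminus Dinv_def blk_inv[OF D_bd pd])
  have qS: "q (Suc \<tau>) = Dinv *v (B *v q \<tau> - v)" for \<tau>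
    by (rule blk_eq) (simp add: bq Dinv_def blk_inv[OF D_bd pd] blk_minus blk_nb[OF Bnb])
  have closed: "q \<tau> = - (\<Sum>s\<in>{0..\<tau>}. mpow M s *v w)" for \<tau>
  proof (induction \<tau>)
    case 0 then show ?case by (simp add: q0 w_def)
  next
    case (Suc \<tau>)
    have "q (Suc \<tau>) = M *v q \<tau> - w"
      by (simp add: qS M_def w_def matrix_vector_mult_diff_distrib matrix_vector_mul_assoc)
    also have "\<dots> = - (\<Sum>s\<in>{0..\<tau>}. mpow M (Suc s) *v w) - w"
      by (simp add: Suc vec.neg vec.sum matrix_vector_mul_assoc)
    also have "\<dots> = - (\<Sum>s\<in>{0..Suc \<tau>}. mpow M s *v w)"
      by (subst sum.atLeast0_atMost_Suc_shift) (simp add: o_def del: mpow.simps(2) sum.atLeast0_atMost_Suc)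
    finally show ?case .
  qed
  have DD: "Dhalf ** Dhalf = Dinv" using Dhalf_def by (simp add: Dinv_def D_def Hf_def Hg_def)
  have hm: "Dhalf ** mpow X s ** Dhalf = mpow M s ** Dinv" for s
  proof (induction s)
    case 0 then show ?case by (simp add: DD)
  next
    case (Suc s)
    have "Dhalf ** mpow X (Suc s) ** Dhalf = (Dhalf ** Dhalf) ** B ** (Dhalf ** mpow X s ** Dhalf)"
      by (simp add: X_def matrix_mul_assoc)
    also have "\<dots> = mpow M (Suc s) ** Dinv"
      by (simp add: Suc DD M_def matrix_mul_assoc)
    finally show ?case .
  qed
  have Hv: "(Dhalf ** (\<Sum>\<tau>\<in>{0..K}. mpow X \<tau>) ** Dhalf) *v v = (\<Sum>s\<in>{0..K}. mpow M s *v w)"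
  proof -
    have "(Dhalf ** (\<Sum>\<tau>\<in>{0..K}. mpow X \<tau>) ** Dhalf) *v v
        = Dhalf *v ((\<Sum>\<tau>\<in>{0..K}. mpow X \<tau>) *v (Dhalf *v v))"
      by (simp add: matrix_vector_mul_assoc matrix_mul_assoc)
    also have "\<dots> = (\<Sum>\<tau>\<in>{0..K}. Dhalf *v (mpow X \<tau> *v (Dhalf *v v)))"
      by (simp add: sum_mv vec.sum)
    also have "\<dots> = (\<Sum>\<tau>\<in>{0..K}. (Dhalf ** mpow X \<tau> ** Dhalf) *v v)"
      by (simp add: matrix_vector_mul_assoc matrix_mul_assoc)
    also have "\<dots> = (\<Sum>s\<in>{0..K}. mpow M s *v w)"
      by (simp add: hm w_def matrix_vector_mul_assoc)
    finally show ?thesis .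
  qed
  have fin: "\<forall>i. dist_dir D B N v K i = blk (- ((Dhalf ** (\<Sum>\<tau>\<in>{0..K}. mpow X \<tau>) ** Dhalf) *v v)) i"
    using bq closed Hv by (metis)
  show ?thesis unfolding Let_def
    using fin unfolding D_def B_def Hf_def Hg_def N_def v_def X_def by simp
qed
end
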